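(* For each $d$, let $X_0,X_1,\dots,X_n$ be i.i.d. $N(0,I_d)$, let $\varepsilon\sim N(0,I_d)$ be independent of them, and let $Y_0=X_0+\varepsilon$. Define the weights $$w_i=\frac{\exp(-\|Y_0-X_i\|^2/2)}{\sum_{j=1}^n\exp(-\|Y_0-X_j\|^2/2)},\quad i=1,\dots,n.$$ Let $h:\mathbb R^d\to\mathbb R$ be bounded (with a bound $M$ not depending on $d$), let $E^*h(X^* )=\sum_{j=1}^n w_jh(X_j)$, and let $E_1h(X)$ denote the expectation of $h(X)$ under the true posterior $p(X\mid Y_0)$ (which is $N(Y_0/2,\tfrac12 I_d)$). Then, if $\log n/d\to\infty$, $$|E^*h(X^* )-E_1h(X)|\xrightarrow{P}0.$$
   Context: $\|\cdot\|$ is the Euclidean norm. $E^*$ is the expectation of $h(X^* )$ when $X^*$ is drawn from the weighted empirical measure $\sum_{j}w_j\delta_{X_j}$. *)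

theory Defs
  imports "HOL-Probability.Probability"
begin

text \<open>Vectors in R^d are represented as functions nat => real, padded with 0 outside {..<d}.\<close>

definition pad :: "nat \<Rightarrow> (nat \<Rightarrow> real) \<Rightarrow> nat \<Rightarrow> real" where
  "pad d x = (\<lambda>k. if k < d then x k else 0)"

definition sqdist :: "nat \<Rightarrow> (nat \<Rightarrow> real) \<Rightarrow> (nat \<Rightarrow> real) \<Rightarrow> real" where
  "sqdist d x y = (\<Sum>k<d. (x k - y k)^2)"

text \<open>Joint sample space: coordinates (i,k) with i \<le> n, k < d, all i.i.d. N(0,1).
  Rows i = 0..n give X_0,...,X_n; row Suc n gives the noise epsilon.\<close>
definition sample_space :: "nat \<Rightarrow> nat \<Rightarrow> (nat \<times> nat \<Rightarrow> real) measure" where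
  "sample_space n d = PiM ({..Suc n} \<times> {..<d}) (\<lambda>_. density lborel std_normal_density)"

definition Xv :: "nat \<Rightarrow> nat \<Rightarrow> (nat \<times> nat \<Rightarrow> real) \<Rightarrow> nat \<Rightarrow> real" where
  "Xv d i \<omega> = pad d (\<lambda>k. \<omega> (i, k))"

definition Epsv :: "nat \<Rightarrow> nat \<Rightarrow> (nat \<times> nat \<Rightarrow> real) \<Rightarrow> nat \<Rightarrow> real" where
  "Epsv n d \<omega> = pad d (\<lambda>k. \<omega> (Suc n, k))"

definition Y0 :: "nat \<Rightarrow> nat \<Rightarrow> (nat \<times> nat \<Rightarrow> real) \<Rightarrow> nat \<Rightarrow> real" where
  "Y0 n d \<omega> = (\<lambda>k. Xv d 0 \<omega> k + Epsv n d \<omega> k)"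

definition weight :: "nat \<Rightarrow> nat \<Rightarrow> (nat \<Rightarrow> real) \<Rightarrow> (nat \<Rightarrow> nat \<Rightarrow> real) \<Rightarrow> nat \<Rightarrow> real" where
  "weight d n y X i = exp (- sqdist d y (X i) / 2) / (\<Sum>j\<in>{1..n}. exp (- sqdist d y (X j) / 2))"

definition wemp_exp :: "nat \<Rightarrow> nat \<Rightarrow> ((nat \<Rightarrow> real) \<Rightarrow> real) \<Rightarrow> (nat \<Rightarrow> real) \<Rightarrow> (nat \<Rightarrow> nat \<Rightarrow> real) \<Rightarrow> real" where
  "wemp_exp d n h y X = (\<Sum>j\<in>{1..n}. weight d n y X j * h (X j))"

definition posterior :: "nat \<Rightarrow> (nat \<Rightarrow> real) \<Rightarrow> (nat \<Rightarrow> real) measure" where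
  "posterior d y = PiM {..<d} (\<lambda>k. density lborel (normal_density (y k / 2) (sqrt (1/2))))"

definition post_exp :: "nat \<Rightarrow> ((nat \<Rightarrow> real) \<Rightarrow> real) \<Rightarrow> (nat \<Rightarrow> real) \<Rightarrow> real" where
  "post_exp d h y = (\<integral>x. h (pad d x) \<partial>posterior d y)"

end

theory Submission
  imports Defs
begin



lemma indicator_PiE_prod:
  assumes "x \<in> extensional I" "finite I"
  shows "indicator (Pi\<^sub>E I A) x = (\<Prod>i\<in>I. indicator (A i) (x i) :: ennreal)"
proof (cases "x \<in> Pi\<^sub>E I A")
  case True
  then have "\<forall>i\<in>I. x i \<in> A i" by (auto simp: PiE_iff)
  then show ?thesis using True by (simp add: indicator_def)
next
  case False
  then obtain i where "i \<in> I" "x i \<notin> A i" using assms(1) by (auto simp: PiE_iff)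
  then show ?thesis using False assms(2) by (simp add: indicator_def, blast)
qed
lemma emeasure_density_borel:
  assumes "A \<in> sets borel" "f \<in> borel_measurable borel"
  shows "(\<integral>\<^sup>+ x. ennreal (f x) * indicator A x \<partial>lborel) = emeasure (density lborel f) A"
  using assms by (subst emeasure_density) auto
lemma T1: fixes x :: "'i \<Rightarrow> real" assumes "x \<in> space (PiM I (\<lambda>_. lborel))" "finite I" shows "indicator (Pi\<^sub>E I A) x = (\<Prod>i\<in>I. indicator (A i) (x i) :: ennreal)"
  using assms by (intro indicator_PiE_prod) (auto simp: space_PiM PiE_def)

lemma PiM_density_lborel:
  fixes f :: "'i \<Rightarrow> real \<Rightarrow> real"
  assumes fin: "finite I"
    and f_nn: "\<And>i x. 0 \<le> f i x"
    and f_meas: "\<And>i. f i \<in> borel_measurable borel"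
    and prob: "\<And>i. prob_space (density lborel (f i))"
  shows "PiM I (\<lambda>i. density lborel (f i)) = density (PiM I (\<lambda>_. lborel)) (\<lambda>x. ennreal (\<Prod>i\<in>I. f i (x i)))"
proof -
  have psf: "product_sigma_finite (\<lambda>i. density lborel (f i))"
    unfolding product_sigma_finite_def using prob by (blast intro: prob_space_imp_sigma_finite)
  have psfL: "product_sigma_finite (\<lambda>_::'i. lborel::real measure)"
    unfolding product_sigma_finite_def by (blast intro: lborel.sigma_finite_measure_axioms)
  have meas: "(\<lambda>x. ennreal (\<Prod>i\<in>I. f i (x i))) \<in> borel_measurable (PiM I (\<lambda>_. lborel))"
    using f_meas by (intro measurable_compose[OF _ measurable_ennreal] borel_measurable_prod measurable_compose[OF measurable_component_singleton]) auto
  show ?thesis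
  proof (rule product_sigma_finite.PiM_eqI[OF psf, symmetric])
    show "finite I" by fact
    show "sets (density (PiM I (\<lambda>_. lborel)) (\<lambda>x. ennreal (\<Prod>i\<in>I. f i (x i)))) = sets (PiM I (\<lambda>i. density lborel (f i)))"
      by (simp only: sets_density) (rule sets_PiM_cong; simp)
    fix A assume A: "\<And>i. i \<in> I \<Longrightarrow> A i \<in> sets (density lborel (f i))"
    have A': "\<And>i. i \<in> I \<Longrightarrow> A i \<in> sets borel" using A by simp
    have PA: "Pi\<^sub>E I A \<in> sets (PiM I (\<lambda>_. lborel))"
      using A' fin by (intro sets_PiM_I_finite) auto
    have "emeasure (density (PiM I (\<lambda>_. lborel)) (\<lambda>x. ennreal (\<Prod>i\<in>I. f i (x i)))) (Pi\<^sub>E I A)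
        = (\<integral>\<^sup>+ x. ennreal (\<Prod>i\<in>I. f i (x i)) * indicator (Pi\<^sub>E I A) x \<partial>PiM I (\<lambda>_. lborel))"
      by (rule emeasure_density[OF meas PA])
    also have "\<dots> = (\<integral>\<^sup>+ x. (\<Prod>i\<in>I. ennreal (f i (x i)) * indicator (A i) (x i)) \<partial>PiM I (\<lambda>_. lborel))"
    proof (rule nn_integral_cong)
      fix x assume x: "x \<in> space (PiM I (\<lambda>_. lborel::real measure))"
      have ind: "indicator (Pi\<^sub>E I A) x = (\<Prod>i\<in>I. indicator (A i) (x i) :: ennreal)"
        using x fin by (rule T1)
      have pe: "ennreal (\<Prod>i\<in>I. f i (x i)) = (\<Prod>i\<in>I. ennreal (f i (x i)))"
        by (rule prod_ennreal[symmetric]) (rule f_nn)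
      show "ennreal (\<Prod>i\<in>I. f i (x i)) * indicator (Pi\<^sub>E I A) x = (\<Prod>i\<in>I. ennreal (f i (x i)) * indicator (A i) (x i))"
        by (simp only: ind pe prod.distrib)
    qed
    also have "\<dots> = (\<Prod>i\<in>I. \<integral>\<^sup>+ x. ennreal (f i x) * indicator (A i) x \<partial>lborel)"
      using fin A' f_meas by (intro product_sigma_finite.product_nn_integral_prod[OF psfL]) auto
    also have "\<dots> = (\<Prod>i\<in>I. emeasure (density lborel (f i)) (A i))"
      by (rule prod.cong[OF refl], rule emeasure_density_borel) (use A' f_meas in auto)
    finally show "emeasure (density (PiM I (\<lambda>_. lborel)) (\<lambda>x. ennreal (\<Prod>i\<in>I. f i (x i)))) (Pi\<^sub>E I A)
        = (\<Prod>i\<in>I. emeasure (density lborel (f i)) (A i))" .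
  qed
qed



lemma gauss1:
  "std_normal_density x * exp (- ((y - x)^2) / 2) = (exp (-(y^2)/4) / sqrt 2) * normal_density (y/2) (sqrt (1/2)) x"
proof -
  have e: "-(x^2)/2 + (- ((y - x)^2) / 2) = -(y^2)/4 + (- ((x - y/2)^2))"
    by (simp add: power2_eq_square field_simps)
  have s: "sqrt (2 * pi) = sqrt 2 * sqrt pi" by (simp add: real_sqrt_mult)
  have s': "sqrt (pi * 2) = sqrt pi * sqrt 2" by (simp add: real_sqrt_mult)
  have "std_normal_density x * exp (- ((y - x)^2) / 2) = (1 / sqrt (2 * pi)) * exp (-(x^2)/2 + (- ((y - x)^2) / 2))"
    unfolding std_normal_density_def exp_add by (simp add: mult.assoc)
  also have "\<dots> = (1 / sqrt (2 * pi)) * (exp (-(y^2)/4) * exp (- ((x - y/2)^2)))"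
    by (simp only: e exp_add)
  also have "\<dots> = (exp (-(y^2)/4) / sqrt 2) * (1 / sqrt pi * exp (- ((x - y/2)^2)))"
    by (simp add: s s' field_simps)
  also have "1 / sqrt pi * exp (- ((x - y/2)^2)) = normal_density (y/2) (sqrt (1/2)) x"
    by (simp add: normal_density_def)
  finally show ?thesis .
qed

lemma std_PiM:
  "PiM I (\<lambda>_. density lborel std_normal_density) =
     density (PiM I (\<lambda>_. lborel)) (\<lambda>x. ennreal (\<Prod>i\<in>I. std_normal_density (x i)))" if "finite I"
  using PiM_density_lborel[of I "\<lambda>_. std_normal_density", OF that] prob_space_normal_density by simp

lemma posterior_density:
  "posterior d y = density (PiM {..<d} (\<lambda>_. lborel))
      (\<lambda>x. ennreal (\<Prod>k\<in>{..<d}. normal_density (y k / 2) (sqrt (1/2)) (x k)))"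
proof -
  have "0 < sqrt (1/2::real)" by (rule real_sqrt_gt_zero) simp
  then show ?thesis unfolding posterior_def by (subst PiM_density_lborel) (auto intro: prob_space_normal_density)
qed

lemma prob_space_posterior: "prob_space (posterior d y)"
  unfolding posterior_def by (intro prob_space_PiM prob_space_normal_density) simp

lemma CM:
  fixes H :: "(nat \<Rightarrow> real) \<Rightarrow> real"
  assumes Hm: "H \<in> borel_measurable (PiM {..<d} (\<lambda>_. borel))"
  shows "(\<integral>x. exp (-(\<Sum>k<d. (y k - x k)^2)/2) * H x \<partial>PiM {..<d} (\<lambda>_. density lborel std_normal_density))
         = (\<Prod>k<d. exp (-(y k ^ 2)/4) / sqrt 2) * (\<integral>x. H x \<partial>posterior d y)"
proof -
  let ?L = "PiM {..<d} (\<lambda>_. lborel::real measure)"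
  have sL: "sets ?L = sets (PiM {..<d} (\<lambda>_. borel))"
    by (rule sets_PiM_cong) simp_all
  have HL: "H \<in> borel_measurable ?L"
    using Hm by (simp add: measurable_cong_sets[OF sL refl])
  have m1: "(\<lambda>x. \<Prod>k\<in>{..<d}. std_normal_density (x k)) \<in> borel_measurable ?L"
    by (intro borel_measurable_prod measurable_compose[OF measurable_component_singleton]) auto
  have m2: "(\<lambda>x. \<Prod>k\<in>{..<d}. normal_density (y k / 2) (sqrt (1/2)) (x k)) \<in> borel_measurable ?L"
    by (intro borel_measurable_prod measurable_compose[OF measurable_component_singleton]) auto
  have mG: "(\<lambda>x. exp (-(\<Sum>k<d. (y k - x k)^2)/2) * H x) \<in> borel_measurable ?L"
    using HL by measurable
  have "(\<integral>x. exp (-(\<Sum>k<d. (y k - x k)^2)/2) * H x \<partial>PiM {..<d} (\<lambda>_. density lborel std_normal_density))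
      = (\<integral>x. (\<Prod>k\<in>{..<d}. std_normal_density (x k)) *\<^sub>R (exp (-(\<Sum>k<d. (y k - x k)^2)/2) * H x) \<partial>?L)"
    unfolding std_PiM[OF finite_lessThan]
    by (rule integral_density[OF mG m1]) (simp add: prod_nonneg)
  also have "\<dots> = (\<integral>x. (\<Prod>k<d. exp (-(y k ^ 2)/4) / sqrt 2) * ((\<Prod>k\<in>{..<d}. normal_density (y k / 2) (sqrt (1/2)) (x k)) *\<^sub>R H x) \<partial>?L)"
  proof (rule Bochner_Integration.integral_cong[OF refl])
    fix x :: "nat \<Rightarrow> real"
    have "exp (-(\<Sum>k<d. (y k - x k)^2)/2) = (\<Prod>k<d. exp (- ((y k - x k)^2) / 2))"
      by (simp add: exp_sum[symmetric] sum_negf sum_divide_distrib)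
    then have "(\<Prod>k\<in>{..<d}. std_normal_density (x k)) * exp (-(\<Sum>k<d. (y k - x k)^2)/2)
        = (\<Prod>k<d. std_normal_density (x k) * exp (- ((y k - x k)^2) / 2))"
      by (simp add: prod.distrib)
    also have "\<dots> = (\<Prod>k<d. (exp (-(y k ^ 2)/4) / sqrt 2) * normal_density (y k/2) (sqrt (1/2)) (x k))"
      by (simp only: gauss1)
    also have "\<dots> = (\<Prod>k<d. exp (-(y k ^ 2)/4) / sqrt 2) * (\<Prod>k\<in>{..<d}. normal_density (y k / 2) (sqrt (1/2)) (x k))"
      by (rule prod.distrib)
    finally show "(\<Prod>k\<in>{..<d}. std_normal_density (x k)) *\<^sub>R (exp (-(\<Sum>k<d. (y k - x k)^2)/2) * H x)
        = (\<Prod>k<d. exp (-(y k ^ 2)/4) / sqrt 2) * ((\<Prod>k\<in>{..<d}. normal_density (y k / 2) (sqrt (1/2)) (x k)) *\<^sub>R H x)"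
      by (simp add: mult.assoc[symmetric])
  qed
  also have "\<dots> = (\<Prod>k<d. exp (-(y k ^ 2)/4) / sqrt 2) * (\<integral>x. (\<Prod>k\<in>{..<d}. normal_density (y k / 2) (sqrt (1/2)) (x k)) *\<^sub>R H x \<partial>?L)"
    by (rule integral_mult_right_zero)
  also have "(\<integral>x. (\<Prod>k\<in>{..<d}. normal_density (y k / 2) (sqrt (1/2)) (x k)) *\<^sub>R H x \<partial>?L) = (\<integral>x. H x \<partial>posterior d y)"
    unfolding posterior_density
    by (rule integral_density[OF HL m2, symmetric]) (simp add: prod_nonneg)
  finally show ?thesis .
qed



abbreviation "stdm \<equiv> density lborel std_normal_density"

lemma prob_stdm: "prob_space stdm"
  using prob_space_normal_density[of 1 0] by simp

lemma pps: "product_prob_space (\<lambda>_. stdm)"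
  by (intro product_prob_space.intro product_sigma_finite.intro product_prob_space_axioms.intro)
     (auto intro: prob_space_imp_sigma_finite prob_stdm)


definition Bset :: "nat \<Rightarrow> nat \<Rightarrow> (nat \<times> nat) set" where "Bset n d = {1..n} \<times> {..<d}"
definition Xi :: "nat \<Rightarrow> nat \<Rightarrow> (nat \<times> nat \<Rightarrow> real) \<Rightarrow> nat \<Rightarrow> real" where
  "Xi d j b = (\<lambda>k\<in>{..<d}. b (j,k))"
abbreviation "Qd d \<equiv> PiM {..<d} (\<lambda>_::nat. stdm)"

lemma finite_Bset: "finite (Bset n d)" by (simp add: Bset_def)

lemma Xi_meas: "j \<in> {1..n} \<Longrightarrow> Xi d j \<in> measurable (PiM (Bset n d) (\<lambda>_. stdm)) (Qd d)"
  unfolding Xi_def by (intro measurable_restrict measurable_component_singleton) (auto simp: Bset_def)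

lemma Xi_distr: "j \<in> {1..n} \<Longrightarrow> distr (PiM (Bset n d) (\<lambda>_. stdm)) (Qd d) (Xi d j) = Qd d"
  using product_prob_space.distr_reorder[OF pps, of "\<lambda>k. (j,k)" "{..<d}" "Bset n d"]
  by (simp add: Xi_def[abs_def] Bset_def inj_on_def Pi_iff)

lemma Xi_indep:
  assumes "n \<ge> 1" "d \<ge> 1"
  shows "prob_space.indep_vars (PiM (Bset n d) (\<lambda>_. stdm)) (\<lambda>_. Qd d) (Xi d) {1..n}"
proof -
  let ?B = "Bset n d"
  let ?P = "PiM ?B (\<lambda>_. stdm)"
  have P: "prob_space ?P" by (intro prob_space_PiM prob_stdm)
  have "(1,0) \<in> ?B" using assms by (simp add: Bset_def)
  then have Bne: "?B \<noteq> {}" by blast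
  have finB: "finite ?B" by (rule finite_Bset)
  have d1: "distr ?P ?P (\<lambda>x. \<lambda>i\<in>?B. x i) = ?P"
    using product_prob_space.distr_PiM_restrict_finite[OF pps, of ?B ?B] finB by simp
  have d2: "PiM ?B (\<lambda>i. distr ?P stdm (\<lambda>\<omega>. \<omega> i)) = ?P"
    by (rule PiM_cong[OF refl]) (rule distr_PiM_component, rule prob_stdm, simp)
  have coord: "prob_space.indep_vars ?P (\<lambda>_. stdm) (\<lambda>p \<omega>. \<omega> p) ?B"
    by (subst prob_space.indep_vars_iff_distr_eq_PiM'[OF P Bne]) (simp_all add: d1 d2)
  have r: "prob_space.indep_vars ?P (\<lambda>j. PiM ({j}\<times>{..<d}) (\<lambda>_. stdm)) (\<lambda>j \<omega>. restrict (\<lambda>i. \<omega> i) ({j}\<times>{..<d})) {1..n}"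
    by (rule prob_space.indep_vars_restrict[OF P coord]) (auto simp: Bset_def disjoint_family_on_def)
  have c: "prob_space.indep_vars ?P (\<lambda>_. Qd d) (\<lambda>j \<omega>. (\<lambda>x. \<lambda>k\<in>{..<d}. x (j,k)) (restrict (\<lambda>i. \<omega> i) ({j}\<times>{..<d}))) {1..n}"
    by (rule prob_space.indep_vars_compose2[OF P r])
       (intro measurable_restrict measurable_component_singleton, simp)
  have eq: "(\<lambda>j \<omega>. (\<lambda>x. \<lambda>k\<in>{..<d}. x (j,k)) (restrict (\<lambda>i. \<omega> i) ({j}\<times>{..<d}))) = Xi d"
    by (auto simp: fun_eq_iff Xi_def restrict_def)
  show ?thesis using c unfolding eq .
qed

lemma hoeff:
  fixes F :: "(nat \<Rightarrow> real) \<Rightarrow> real"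
  assumes n: "n \<ge> 1" and d: "d \<ge> 1" and Fm: "F \<in> borel_measurable (Qd d)" and Fb: "\<And>x. \<bar>F x\<bar> \<le> C"
    and eps: "\<epsilon> \<ge> 0" and C: "C > 0"
  shows "measure (PiM (Bset n d) (\<lambda>_. stdm))
     {b \<in> space (PiM (Bset n d) (\<lambda>_. stdm)). \<epsilon> \<le> \<bar>(\<Sum>j\<in>{1..n}. F (Xi d j b)) - real n * (\<integral>x. F x \<partial>Qd d)\<bar>}
     \<le> 2 * exp (-2 * \<epsilon>^2 / (real n * (2*C)^2))"
proof -
  let ?P = "PiM (Bset n d) (\<lambda>_. stdm)"
  have P: "prob_space ?P" by (intro prob_space_PiM prob_stdm)
  have ind: "prob_space.indep_vars ?P (\<lambda>_. borel) (\<lambda>j b. F (Xi d j b)) {1..n}"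
    by (rule prob_space.indep_vars_compose2[OF P Xi_indep[OF n d]]) (rule Fm)
  have Fb2: "F x \<in> {-C..C}" for x using Fb[of x] by (auto simp: abs_le_iff)
  have H: "Hoeffding_ineq ?P {1..n} (\<lambda>j b. F (Xi d j b)) (\<lambda>_. -C) (\<lambda>_. C)"
    unfolding Hoeffding_ineq_def indep_interval_bounded_random_variables_def indep_interval_bounded_random_variables_axioms_def
    using P ind Fb2 by (auto intro!: AE_I2)
  have E: "(\<integral>b. F (Xi d j b) \<partial>?P) = (\<integral>x. F x \<partial>Qd d)" if j: "j \<in> {1..n}" for j
  proof -
    have "(\<integral>b. F (Xi d j b) \<partial>?P) = (\<integral>x. F x \<partial>distr ?P (Qd d) (Xi d j))"
      by (rule integral_distr[symmetric]) (rule Xi_meas[OF j], rule Fm)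
    then show ?thesis by (simp add: Xi_distr[OF j])
  qed
  have sE: "(\<Sum>j\<in>{1..n}. \<integral>b. F (Xi d j b) \<partial>?P) = real n * (\<integral>x. F x \<partial>Qd d)"
    using E by simp
  have pos: "0 < (\<Sum>i\<in>{1..n}. ((\<lambda>_. C) i - (\<lambda>_. -C) i)^2)" using n C by simp
  have "measure ?P {b \<in> space ?P. \<epsilon> \<le> \<bar>(\<Sum>j\<in>{1..n}. F (Xi d j b)) - (\<Sum>j\<in>{1..n}. \<integral>b. F (Xi d j b) \<partial>?P)\<bar>}
       \<le> 2 * exp (-2 * \<epsilon>^2 / (\<Sum>i\<in>{1..n}. ((\<lambda>_. C) i - (\<lambda>_. -C) i)^2))"
    by (rule Hoeffding_ineq.Hoeffding_ineq_abs_ge[OF H eps pos])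
  then show ?thesis unfolding sE by (simp add: algebra_simps)
qed



lemma det:
  fixes s1 s2 m z \<delta> I M :: real
  assumes m: "m > 0" and z: "z > 0" and dl: "0 < \<delta>" "\<delta> \<le> 1/2" and I: "\<bar>I\<bar> \<le> M"
    and h1: "\<bar>s1 - m * z * I\<bar> < m * \<delta> * z" and h2: "\<bar>s2 - m * z\<bar> < m * \<delta> * z"
  shows "\<bar>s1 / s2 - I\<bar> \<le> 2 * \<delta> * (1 + M)"
proof -
  have mz: "m * z > 0" using m z by simp
  have a: "\<delta> * (m * z) \<le> (1/2) * (m * z)" using dl mz by (intro mult_right_mono) auto
  have "m * \<delta> * z \<le> m * z / 2" using a by (simp add: mult_ac)
  then have s2: "s2 > m * z / 2" using h2 by linarith
  then have s2p: "s2 > 0" using mz by linarith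
  have M0: "M \<ge> 0" using I by linarith
  have "\<bar>s1 - I * s2\<bar> = \<bar>(s1 - m * z * I) + I * (m * z - s2)\<bar>" by (simp add: algebra_simps)
  also have "\<dots> \<le> \<bar>s1 - m * z * I\<bar> + \<bar>I\<bar> * \<bar>m * z - s2\<bar>" by (simp add: abs_mult[symmetric] abs_triangle_ineq)
  also have "\<dots> \<le> m * \<delta> * z + M * (m * \<delta> * z)"
    using h1 h2 I by (intro add_mono mult_mono) auto
  finally have num: "\<bar>s1 - I * s2\<bar> \<le> (1 + M) * (m * \<delta> * z)" by (simp add: algebra_simps)
  have "\<bar>s1 / s2 - I\<bar> = \<bar>s1 - I * s2\<bar> / s2" using s2p by (simp add: field_simps abs_div)
  also have "\<dots> \<le> (1 + M) * (m * \<delta> * z) / s2" using num s2p by (simp add: divide_right_mono)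
  also have "\<dots> \<le> (1 + M) * (m * \<delta> * z) / (m * z / 2)"
  proof (rule divide_left_mono)
    show "m * z / 2 \<le> s2" using s2 by linarith
    show "0 \<le> (1 + M) * (m * \<delta> * z)" using M0 dl m z by simp
    show "0 < s2 * (m * z / 2)" using s2p mz by simp
  qed
  also have "\<dots> = 2 * \<delta> * (1 + M)" using m z by (simp add: field_simps)
  finally show ?thesis .
qed


definition Zc :: "nat \<Rightarrow> (nat \<Rightarrow> real) \<Rightarrow> real" where
  "Zc d y = (\<Prod>k<d. exp (-(y k ^ 2)/4) / sqrt 2)"

lemma Zc_pos: "Zc d y > 0" unfolding Zc_def by (intro prod_pos) auto

lemma sets_Qd: "sets (Qd d) = sets (PiM {..<d} (\<lambda>_. borel))" by (rule sets_PiM_cong) simp_all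

lemma sets_post: "sets (posterior d y) = sets (PiM {..<d} (\<lambda>_. borel))"
  unfolding posterior_def by (rule sets_PiM_cong) simp_all

lemma post_bound:
  assumes hm: "(\<lambda>x. h (pad d x)) \<in> borel_measurable (PiM {..<d} (\<lambda>_. borel))"
    and hb: "\<And>x. \<bar>h x\<bar> \<le> M"
  shows "\<bar>post_exp d h y\<bar> \<le> M"
proof -
  interpret Po: prob_space "posterior d y" by (rule prob_space_posterior)
  have m: "(\<lambda>x. h (pad d x)) \<in> borel_measurable (posterior d y)"
    using hm by (simp add: measurable_cong_sets[OF sets_post refl])
  have i: "integrable (posterior d y) (\<lambda>x. h (pad d x))"
    by (rule Po.integrable_const_bound[where B=M]) (use m hb in auto)
  have hb2: "-M \<le> h x" for x using hb[of x] by linarith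
  have "post_exp d h y \<le> M" unfolding post_exp_def
    by (rule Po.integral_le_const[OF i]) (use hb in \<open>auto simp: abs_le_iff\<close>)
  moreover have "-M \<le> post_exp d h y" unfolding post_exp_def
    by (rule Po.integral_ge_const[OF i], rule AE_I2) (use hb2 in auto)
  ultimately show ?thesis by linarith
qed



lemma cond:
  fixes h :: "(nat \<Rightarrow> real) \<Rightarrow> real" and y :: "nat \<Rightarrow> real"
  assumes n: "n \<ge> 1" and d: "d \<ge> 1"
    and hm: "(\<lambda>x. h (pad d x)) \<in> borel_measurable (PiM {..<d} (\<lambda>_. borel))"
    and hb: "\<And>x. \<bar>h x\<bar> \<le> M" and e: "e > 0"
    and \<delta>_def: "\<delta> = min (1/2) (e / (4 * (1 + M)))"
  shows "\<exists>S \<in> sets (PiM (Bset n d) (\<lambda>_. stdm)).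
     {b \<in> space (PiM (Bset n d) (\<lambda>_. stdm)). e < \<bar>wemp_exp d n h y (\<lambda>j. pad d (\<lambda>k. b (j,k))) - post_exp d h y\<bar>} \<subseteq> S
     \<and> measure (PiM (Bset n d) (\<lambda>_. stdm)) S \<le> 4 * exp (- (real n * \<delta>^2 * (Zc d y)^2) / (2 * (M+1)^2))"
proof -
  let ?P = "PiM (Bset n d) (\<lambda>_. stdm)"
  define H where "H x = h (pad d x)" for x
  define G where "G x = exp (-(\<Sum>k<d. (y k - x k)^2)/2)" for x :: "nat \<Rightarrow> real"
  define Z where "Z = Zc d y"
  define I where "I = post_exp d h y"
  have M0: "M \<ge> 0" using hb[of undefined] by linarith
  have Zp: "Z > 0" unfolding Z_def by (rule Zc_pos)
  have \<delta>p1: "\<delta> > 0" using e M0 unfolding \<delta>_def by simp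
  have \<delta>p2: "\<delta> \<le> 1/2" unfolding \<delta>_def by (rule min.cobounded1)
  note \<delta>p12 = \<delta>p1 \<delta>p2
  have d1: "\<delta> \<le> e / (4 * (1 + M))" by (simp add: \<delta>_def)
  have "2 * \<delta> * (1 + M) \<le> 2 * (e / (4 * (1 + M))) * (1 + M)"
    using d1 M0 by (intro mult_right_mono mult_left_mono) auto
  also have "\<dots> = e / 2" using M0 by (simp add: field_simps)
  finally have "2 * \<delta> * (1 + M) < e" using e by linarith
  note \<delta>p = \<delta>p12 this
  have Hm: "H \<in> borel_measurable (Qd d)" using hm unfolding H_def by (simp add: measurable_cong_sets[OF sets_Qd refl])
  have Gm: "G \<in> borel_measurable (Qd d)" unfolding G_def by measurable
  have G01: "0 < G x" "G x \<le> 1" for x unfolding G_def by (auto intro: sum_nonneg)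
  have HM: "\<bar>H x\<bar> \<le> M" for x unfolding H_def by (rule hb)
  have F1b: "\<bar>G x * H x\<bar> \<le> M + 1" for x
  proof -
    have "\<bar>G x * H x\<bar> = G x * \<bar>H x\<bar>" using G01[of x] by (simp add: abs_mult)
    also have "\<dots> \<le> 1 * M" using G01[of x] HM[of x] M0 by (intro mult_mono) auto
    finally show ?thesis by simp
  qed
  have F2b: "\<bar>G x\<bar> \<le> M + 1" for x using G01[of x] M0 by simp
  have IM: "\<bar>I\<bar> \<le> M" unfolding I_def by (rule post_bound[OF hm hb])
  have int1: "(\<integral>x. G x * H x \<partial>Qd d) = Z * I"
    unfolding G_def H_def Z_def I_def post_exp_def Zc_def by (rule CM[OF hm])
  have int2: "(\<integral>x. G x \<partial>Qd d) = Z"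
  proof -
    have "(\<integral>x. G x * 1 \<partial>Qd d) = Z * (\<integral>x. 1 \<partial>posterior d y)"
      unfolding G_def Z_def Zc_def by (rule CM) simp
    moreover have "(\<integral>x. 1 \<partial>posterior d y) = (1::real)"
      using prob_space.prob_space[OF prob_space_posterior[of d y]] by simp
    ultimately show ?thesis by simp
  qed
  define \<epsilon> where "\<epsilon> = real n * \<delta> * Z"
  have \<epsilon>0: "\<epsilon> \<ge> 0" using \<delta>p Zp by (simp add: \<epsilon>_def)
  define S1 where "S1 = {b \<in> space ?P. \<epsilon> \<le> \<bar>(\<Sum>j\<in>{1..n}. (\<lambda>x. G x * H x) (Xi d j b)) - real n * (\<integral>x. G x * H x \<partial>Qd d)\<bar>}"
  define S2 where "S2 = {b \<in> space ?P. \<epsilon> \<le> \<bar>(\<Sum>j\<in>{1..n}. G (Xi d j b)) - real n * (\<integral>x. G x \<partial>Qd d)\<bar>}"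
  have F1m: "(\<lambda>x. G x * H x) \<in> borel_measurable (Qd d)" using Gm Hm by measurable
  have f1m: "(\<lambda>b. \<Sum>j\<in>{1..n}. (\<lambda>x. G x * H x) (Xi d j b)) \<in> borel_measurable ?P"
    by (rule borel_measurable_sum) (rule measurable_compose[OF Xi_meas F1m], simp)
  have f2m: "(\<lambda>b. \<Sum>j\<in>{1..n}. G (Xi d j b)) \<in> borel_measurable ?P"
    by (rule borel_measurable_sum) (rule measurable_compose[OF Xi_meas Gm], simp)
  have S1m: "S1 \<in> sets ?P" unfolding S1_def using f1m by measurable
  have S2m: "S2 \<in> sets ?P" unfolding S2_def using f2m by measurable
  have bnd: "2 * exp (-2 * \<epsilon>^2 / (real n * (2 * (M+1))^2)) = 2 * exp (- (real n * \<delta>^2 * Z^2) / (2 * (M+1)^2))"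
  proof -
    have nq: "real n > 0" using n by simp
    have mq: "M + 1 > 0" using M0 by simp
    have "-2 * \<epsilon>^2 / (real n * (2 * (M+1))^2) = -2 * (real n * real n * (\<delta>^2 * Z^2)) / (real n * (4 * (M+1)^2))"
      by (simp add: \<epsilon>_def power2_eq_square algebra_simps)
    also have "\<dots> = - (real n * (\<delta>^2 * Z^2)) / (2 * (M+1)^2)"
      using nq mq by (simp add: divide_simps)
    finally show ?thesis by (simp add: mult_ac)
  qed
  have mS1: "measure ?P S1 \<le> 2 * exp (- (real n * \<delta>^2 * Z^2) / (2 * (M+1)^2))"
    unfolding S1_def bnd[symmetric] using M0 by (intro hoeff[OF n d F1m F1b \<epsilon>0]) simp
  have mS2: "measure ?P S2 \<le> 2 * exp (- (real n * \<delta>^2 * Z^2) / (2 * (M+1)^2))"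
    unfolding S2_def bnd[symmetric] using M0 by (intro hoeff[OF n d Gm F2b \<epsilon>0]) simp
  have incl: "{b \<in> space ?P. e < \<bar>wemp_exp d n h y (\<lambda>j. pad d (\<lambda>k. b (j,k))) - post_exp d h y\<bar>} \<subseteq> S1 \<union> S2"
  proof (rule subsetI, rule ccontr)
    fix b assume b: "b \<in> {b \<in> space ?P. e < \<bar>wemp_exp d n h y (\<lambda>j. pad d (\<lambda>k. b (j,k))) - post_exp d h y\<bar>}"
      and nb: "b \<notin> S1 \<union> S2"
    let ?s1 = "\<Sum>j\<in>{1..n}. G (Xi d j b) * H (Xi d j b)"
    let ?s2 = "\<Sum>j\<in>{1..n}. G (Xi d j b)"
    have h1: "\<bar>?s1 - real n * Z * I\<bar> < real n * \<delta> * Z"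
      using b nb int1 by (auto simp: S1_def \<epsilon>_def mult.assoc)
    have h2: "\<bar>?s2 - real n * Z\<bar> < real n * \<delta> * Z"
      using b nb int2 by (auto simp: S2_def \<epsilon>_def)
    have gj: "exp (- sqdist d y (pad d (\<lambda>k. b (j,k))) / 2) = G (Xi d j b)" for j
      unfolding sqdist_def G_def Xi_def pad_def
      by (rule arg_cong[where f="\<lambda>s. exp (- s / 2)"], rule sum.cong[OF refl]) simp
    have hj: "h (pad d (\<lambda>k. b (j,k))) = H (Xi d j b)" for j
    proof -
      have "pad d (Xi d j b) = pad d (\<lambda>k. b (j,k))" by (auto simp: pad_def Xi_def fun_eq_iff)
      then show ?thesis by (simp add: H_def)
    qed
    have W: "wemp_exp d n h y (\<lambda>j. pad d (\<lambda>k. b (j,k))) = ?s1 / ?s2"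
      unfolding wemp_exp_def weight_def gj hj by (simp add: sum_divide_distrib)
    have "\<bar>?s1 / ?s2 - I\<bar> \<le> 2 * \<delta> * (1 + M)"
      by (rule det[OF _ Zp \<delta>p(1) \<delta>p(2) IM h1 h2]) (use n in simp)
    then show False using b \<delta>p(3) W by (simp add: I_def)
  qed
  show ?thesis
  proof (intro bexI conjI)
    show "S1 \<union> S2 \<in> sets ?P" using S1m S2m by simp
    show "{b \<in> space ?P. e < \<bar>wemp_exp d n h y (\<lambda>j. pad d (\<lambda>k. b (j,k))) - post_exp d h y\<bar>} \<subseteq> S1 \<union> S2" by (rule incl)
    have "measure ?P (S1 \<union> S2) \<le> measure ?P S1 + measure ?P S2" by (rule measure_Un_le[OF S1m S2m])
    also have "\<dots> \<le> 4 * exp (- (real n * \<delta>^2 * (Zc d y)^2) / (2 * (M+1)^2))"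
      using mS1 mS2 by (simp add: Z_def)
    finally show "measure ?P (S1 \<union> S2) \<le> 4 * exp (- (real n * \<delta>^2 * (Zc d y)^2) / (2 * (M+1)^2))" .
  qed
qed



lemma stdm_sq: "integrable stdm (\<lambda>x. x^2)" "(\<integral>x. x^2 \<partial>stdm) = 1"
proof -
  have m: "std_normal_density \<in> borel_measurable borel" by measurable
  show "integrable stdm (\<lambda>x. x^2)"
    using integrable_std_normal_moment[of 2] m by (subst integrable_density) auto
  have "(\<integral>x. x^2 \<partial>stdm) = (\<integral>x. std_normal_density x * x^(2*1) \<partial>lborel)"
    using m by (subst integral_density) auto
  also have "\<dots> = 1" by (subst integral_std_normal_moment_even) (simp add: fact_numeral)
  finally show "(\<integral>x. x^2 \<partial>stdm) = 1" .
qed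

lemma coord_sq:
  assumes p: "p \<in> I"
  shows "integrable (PiM I (\<lambda>_. stdm)) (\<lambda>\<omega>. (\<omega> p)^2)" "(\<integral>\<omega>. (\<omega> p)^2 \<partial>PiM I (\<lambda>_. stdm)) = 1"
proof -
  have dc: "distr (PiM I (\<lambda>_. stdm)) stdm (\<lambda>\<omega>. \<omega> p) = stdm"
    by (rule distr_PiM_component[OF prob_stdm p])
  have cm: "(\<lambda>\<omega>. \<omega> p) \<in> measurable (PiM I (\<lambda>_. stdm)) stdm"
    by (rule measurable_component_singleton[OF p])
  have sm: "(\<lambda>x::real. x^2) \<in> borel_measurable stdm" by measurable
  show "integrable (PiM I (\<lambda>_. stdm)) (\<lambda>\<omega>. (\<omega> p)^2)"
    using integrable_distr_eq[OF cm sm] stdm_sq(1) dc by simp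
  have "(\<integral>\<omega>. (\<omega> p)^2 \<partial>PiM I (\<lambda>_. stdm)) = (\<integral>x. x^2 \<partial>distr (PiM I (\<lambda>_. stdm)) stdm (\<lambda>\<omega>. \<omega> p))"
    by (rule integral_distr[OF cm sm, symmetric])
  then show "(\<integral>\<omega>. (\<omega> p)^2 \<partial>PiM I (\<lambda>_. stdm)) = 1" using dc stdm_sq(2) by simp
qed

lemma Y0_eq: "k < d \<Longrightarrow> Y0 n d \<omega> k = \<omega> (0,k) + \<omega> (Suc n, k)"
  by (simp add: Y0_def Xv_def Epsv_def pad_def)

lemma markov:
  assumes t: "t > 0"
  shows "measure (PiM ({0, Suc n} \<times> {..<d}) (\<lambda>_. stdm))
     {a \<in> space (PiM ({0, Suc n} \<times> {..<d}) (\<lambda>_. stdm)). t < (\<Sum>k<d. (Y0 n d a k)^2)} \<le> 4 * real d / t"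
proof -
  let ?A = "{0, Suc n} \<times> {..<d}"
  let ?PA = "PiM ?A (\<lambda>_. stdm)"
  interpret PA: prob_space ?PA by (intro prob_space_PiM prob_stdm)
  define U' where "U' a = (\<Sum>k<d. 2 * ((a (0,k))^2 + (a (Suc n,k))^2))" for a :: "nat \<times> nat \<Rightarrow> real"
  have le: "(\<Sum>k<d. (Y0 n d a k)^2) \<le> U' a" for a
    unfolding U'_def
  proof (rule sum_mono)
    fix k assume "k \<in> {..<d}"
    then have "Y0 n d a k = a (0,k) + a (Suc n, k)" by (simp add: Y0_eq)
    moreover have "(u + v)^2 \<le> 2 * (u^2 + v^2)" for u v :: real
      using sum_squares_ge_zero[of "u - v" 0] by (simp add: power2_eq_square algebra_simps)
    ultimately show "(Y0 n d a k)^2 \<le> 2 * ((a (0,k))^2 + (a (Suc n,k))^2)" by simp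
  qed
  have p0: "(0,k) \<in> ?A" and p1: "(Suc n,k) \<in> ?A" if "k \<in> {..<d}" for k using that by auto
  have iU: "integrable ?PA U'"
    unfolding U'_def
    by (intro Bochner_Integration.integrable_sum Bochner_Integration.integrable_mult_right Bochner_Integration.integrable_add coord_sq(1) p0 p1)
  have EU: "(\<integral>a. U' a \<partial>?PA) = 4 * real d"
  proof -
    have "(\<integral>a. U' a \<partial>?PA) = (\<Sum>k<d. 2 * ((\<integral>a. (a (0,k))^2 \<partial>?PA) + (\<integral>a. (a (Suc n,k))^2 \<partial>?PA)))"
      unfolding U'_def
      by (simp add: Bochner_Integration.integral_sum coord_sq(1) p0 p1 Bochner_Integration.integral_add
            Bochner_Integration.integrable_sum Bochner_Integration.integrable_mult_right Bochner_Integration.integrable_add)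
    also have "\<dots> = (\<Sum>k<d. 4)" by (intro sum.cong refl) (simp add: coord_sq(2))
    finally show ?thesis by simp
  qed
  have U'm: "U' \<in> borel_measurable ?PA" using iU by (rule borel_measurable_integrable)
  have "measure ?PA {a \<in> space ?PA. t < (\<Sum>k<d. (Y0 n d a k)^2)} \<le> measure ?PA {a \<in> space ?PA. U' a \<ge> t}"
  proof (rule PA.finite_measure_mono)
    show "{a \<in> space ?PA. t < (\<Sum>k<d. (Y0 n d a k)^2)} \<subseteq> {a \<in> space ?PA. U' a \<ge> t}"
      using le by (auto intro: less_imp_le order.trans)
    show "{a \<in> space ?PA. U' a \<ge> t} \<in> sets ?PA" using U'm by measurable
  qed
  also have "\<dots> \<le> (\<integral>a. U' a \<partial>?PA) / t"
    by (rule integral_Markov_inequality_measure[OF iU _ _ t]) (auto simp: U'_def intro!: AE_I2 sum_nonneg)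
  also have "\<dots> = 4 * real d / t" by (simp add: EU)
  finally show ?thesis .
qed



lemma Y0_merge: "Y0 n d (merge ({0, Suc n} \<times> {..<d}) B (a, b)) = Y0 n d a"
  by (auto simp: fun_eq_iff Y0_def Xv_def Epsv_def pad_def merge_def)

lemma Xv_merge: "j \<in> {1..n} \<Longrightarrow> Xv d j (merge ({0, Suc n} \<times> {..<d}) (Bset n d) (a, b)) = pad d (\<lambda>k. b (j,k))"
  by (auto simp: fun_eq_iff Xv_def pad_def merge_def Bset_def)

lemma wemp_cong:
  assumes "\<And>j. j \<in> {1..n} \<Longrightarrow> X j = X' j"
  shows "wemp_exp d n h y X = wemp_exp d n h y X'"
proof -
  have den: "(\<Sum>j\<in>{1..n}. exp (- sqdist d y (X j) / 2)) = (\<Sum>j\<in>{1..n}. exp (- sqdist d y (X' j) / 2))"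
    by (rule sum.cong[OF refl]) (simp add: assms)
  show ?thesis unfolding wemp_exp_def weight_def den
    by (rule sum.cong[OF refl]) (simp add: assms)
qed

lemma Zc_sq: "(Zc d y)^2 = exp (-(\<Sum>k<d. (y k)^2)/2) / 2^d"
proof -
  have "(Zc d y)^2 = (\<Prod>k<d. (exp (-(y k ^ 2)/4) / sqrt 2)^2)"
    unfolding Zc_def by (rule prod_power_distrib)
  also have "\<dots> = (\<Prod>k<d. exp (-(y k ^ 2)/2) / 2)"
  proof (rule prod.cong[OF refl])
    fix k
    have "(exp (-(y k ^ 2)/4))^2 = exp (-(y k ^ 2)/2)"
      by (simp add: power2_eq_square exp_add[symmetric])
    then show "(exp (-(y k ^ 2)/4) / sqrt 2)^2 = exp (-(y k ^ 2)/2) / 2"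
      by (simp add: power_divide)
  qed
  also have "\<dots> = (\<Prod>k<d. exp (-(y k ^ 2)/2)) / 2^d"
    by (simp add: prod_dividef)
  also have "(\<Prod>k<d. exp (-(y k ^ 2)/2)) = exp (\<Sum>k<d. -(y k ^ 2)/2)"
    by (simp add: exp_sum)
  also have "(\<Sum>k<d. -(y k ^ 2)/2) = -(\<Sum>k<d. (y k)^2)/2"
    by (simp add: sum_negf sum_divide_distrib)
  finally show ?thesis .
qed

lemma exp_bound:
  assumes "(\<Sum>k<d. (y k)^2) \<le> t" "M \<ge> 0"
  shows "4 * exp (- (real n * \<delta>^2 * (Zc d y)^2) / (2 * (M+1)^2))
       \<le> 4 * exp (- (real n * \<delta>^2 * (exp (-t/2) / 2^d)) / (2 * (M+1)^2))"
proof -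
  have "exp (-t/2) / 2^d \<le> (Zc d y)^2"
    unfolding Zc_sq using assms(1) by (intro divide_right_mono) auto
  then have "real n * \<delta>^2 * (exp (-t/2) / 2^d) \<le> real n * \<delta>^2 * (Zc d y)^2"
    by (intro mult_left_mono) auto
  then have "- (real n * \<delta>^2 * (Zc d y)^2) / (2 * (M+1)^2) \<le> - (real n * \<delta>^2 * (exp (-t/2) / 2^d)) / (2 * (M+1)^2)"
    using assms(2) by (intro divide_right_mono) auto
  then show ?thesis by simp
qed



lemma main_bound:
  fixes h :: "(nat \<Rightarrow> real) \<Rightarrow> real"
  assumes n: "n \<ge> 1" and d: "d \<ge> 1" and t: "t > 0"
    and hm: "(\<lambda>x. h (pad d x)) \<in> borel_measurable (PiM {..<d} (\<lambda>_. borel))"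
    and hb: "\<And>x. \<bar>h x\<bar> \<le> M" and e: "e > 0"
    and \<delta>_def: "\<delta> = min (1/2) (e / (4 * (1 + M)))"
  shows "measure (sample_space n d)
     {\<omega> \<in> space (sample_space n d). \<bar>wemp_exp d n h (Y0 n d \<omega>) (\<lambda>i. Xv d i \<omega>) - post_exp d h (Y0 n d \<omega>)\<bar> > e}
     \<le> 4 * real d / t + 4 * exp (- (real n * \<delta>^2 * (exp (-t/2) / 2^d)) / (2 * (M+1)^2))"
    (is "measure _ ?E \<le> 4 * real d / t + ?\<beta>")
proof -
  let ?A = "{0, Suc n} \<times> {..<d}"
  let ?B = "Bset n d"
  let ?PA = "PiM ?A (\<lambda>_. stdm)"
  let ?PB = "PiM ?B (\<lambda>_. stdm)"
  let ?P = "sample_space n d"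
  define U where "U a = (\<Sum>k<d. (Y0 n d a k)^2)" for a
  have M0: "M \<ge> 0" using hb[of undefined] by linarith
  have \<beta>0: "0 \<le> ?\<beta>" by simp
  have AB: "{..Suc n} \<times> {..<d} = ?A \<union> ?B"
    by (auto simp: Bset_def)
  have disj: "?A \<inter> ?B = {}" by (auto simp: Bset_def)
  have Pdef: "?P = PiM (?A \<union> ?B) (\<lambda>_. stdm)" unfolding sample_space_def AB ..
  show ?thesis
  proof (cases "?E \<in> sets ?P")
    case False
    then show ?thesis using t \<beta>0 by (simp add: measure_notin_sets)
  next
    case True
    note Es = True
    interpret PA: prob_space ?PA by (intro prob_space_PiM prob_stdm)
    interpret PB: prob_space ?PB by (intro prob_space_PiM prob_stdm)
    interpret P: prob_space ?P unfolding sample_space_def by (intro prob_space_PiM prob_stdm)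
    have psf: "product_sigma_finite (\<lambda>_::nat\<times>nat. stdm)"
      unfolding product_sigma_finite_def by (blast intro: prob_space_imp_sigma_finite prob_stdm)
    have dm: "distr (?PA \<Otimes>\<^sub>M ?PB) (PiM (?A \<union> ?B) (\<lambda>_. stdm)) (merge ?A ?B) = PiM (?A \<union> ?B) (\<lambda>_. stdm)"
      by (rule product_sigma_finite.distr_merge[OF psf disj]) (auto simp: finite_Bset)
    have mm: "merge ?A ?B \<in> measurable (?PA \<Otimes>\<^sub>M ?PB) (PiM (?A \<union> ?B) (\<lambda>_. stdm))"
      by (rule measurable_merge)
    define E' where "E' = merge ?A ?B -` ?E \<inter> space (?PA \<Otimes>\<^sub>M ?PB)"
    have Es': "?E \<in> sets (PiM (?A \<union> ?B) (\<lambda>_. stdm))" using Es Pdef by simp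
    have E'm: "E' \<in> sets (?PA \<Otimes>\<^sub>M ?PB)" unfolding E'_def by (rule measurable_sets[OF mm Es'])
    have "emeasure ?P ?E = emeasure (distr (?PA \<Otimes>\<^sub>M ?PB) (PiM (?A \<union> ?B) (\<lambda>_. stdm)) (merge ?A ?B)) ?E"
      using Pdef dm by simp
    also have "\<dots> = emeasure (?PA \<Otimes>\<^sub>M ?PB) E'"
      unfolding E'_def by (rule emeasure_distr[OF mm Es'])
    also have "\<dots> = (\<integral>\<^sup>+ a. emeasure ?PB (Pair a -` E') \<partial>?PA)"
      by (rule sigma_finite_measure.emeasure_pair_measure_alt[OF prob_space_imp_sigma_finite[OF PB.prob_space_axioms] E'm])
    also have "\<dots> \<le> (\<integral>\<^sup>+ a. indicator {a \<in> space ?PA. t < U a} a + ennreal ?\<beta> \<partial>?PA)"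
    proof (rule nn_integral_mono)
      fix a assume a: "a \<in> space ?PA"
      show "emeasure ?PB (Pair a -` E') \<le> indicator {a \<in> space ?PA. t < U a} a + ennreal ?\<beta>"
      proof (cases "t < U a")
        case True
        then have "indicator {a \<in> space ?PA. t < U a} a = (1::ennreal)" using a by simp
        moreover have "emeasure ?PB (Pair a -` E') \<le> 1" by (rule PB.emeasure_le_1)
        ultimately show ?thesis by (simp add: add_increasing2)
      next
        case False
        define y where "y = Y0 n d a"
        have Uy: "(\<Sum>k<d. (y k)^2) \<le> t" using False by (simp add: U_def y_def)
        obtain S where S: "S \<in> sets ?PB"
          "{b \<in> space ?PB. e < \<bar>wemp_exp d n h y (\<lambda>j. pad d (\<lambda>k. b (j,k))) - post_exp d h y\<bar>} \<subseteq> S"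
          "measure ?PB S \<le> 4 * exp (- (real n * \<delta>^2 * (Zc d y)^2) / (2 * (M+1)^2))"
          using cond[OF n d hm hb e \<delta>_def, of y] by blast
        have sub: "Pair a -` E' \<subseteq> S"
        proof
          fix b assume "b \<in> Pair a -` E'"
          then have b: "b \<in> space ?PB" and bad: "merge ?A ?B (a, b) \<in> ?E"
            using a by (auto simp: E'_def space_pair_measure)
          have "wemp_exp d n h (Y0 n d (merge ?A ?B (a, b))) (\<lambda>i. Xv d i (merge ?A ?B (a, b)))
              = wemp_exp d n h y (\<lambda>j. pad d (\<lambda>k. b (j,k)))"
            unfolding Y0_merge y_def by (rule wemp_cong) (rule Xv_merge)
          moreover have "post_exp d h (Y0 n d (merge ?A ?B (a, b))) = post_exp d h y"
            unfolding Y0_merge y_def ..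
          ultimately have "e < \<bar>wemp_exp d n h y (\<lambda>j. pad d (\<lambda>k. b (j,k))) - post_exp d h y\<bar>"
            using bad by simp
          then show "b \<in> S" using S(2) b by blast
        qed
        have "emeasure ?PB (Pair a -` E') \<le> emeasure ?PB S" by (rule emeasure_mono[OF sub S(1)])
        also have "\<dots> = ennreal (measure ?PB S)" by (rule PB.emeasure_eq_measure)
        also have "\<dots> \<le> ennreal ?\<beta>"
          using S(3) exp_bound[OF Uy M0, of n \<delta>] by (intro ennreal_leI) linarith
        also have "\<dots> \<le> indicator {a \<in> space ?PA. t < U a} a + ennreal ?\<beta>" by simp
        finally show ?thesis .
      qed
    qed
    also have "\<dots> = emeasure ?PA {a \<in> space ?PA. t < U a} + ennreal ?\<beta>"
    proof -
      have Um: "U \<in> borel_measurable ?PA"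
      proof -
        have "U = (\<lambda>a. \<Sum>k<d. (a (0,k) + a (Suc n, k))^2)"
          by (auto simp: fun_eq_iff U_def Y0_eq intro!: sum.cong)
        also have "\<dots> \<in> borel_measurable ?PA"
          by (rule borel_measurable_sum)
             (intro borel_measurable_power borel_measurable_add measurable_component_singleton, auto)
        finally show ?thesis .
      qed
      have Sm: "{a \<in> space ?PA. t < U a} \<in> sets ?PA" using Um by measurable
      show ?thesis
        using Sm by (subst nn_integral_add) (auto simp: PA.emeasure_space_1)
    qed
    also have "\<dots> \<le> ennreal (4 * real d / t) + ennreal ?\<beta>"
    proof -
      have "emeasure ?PA {a \<in> space ?PA. t < U a} = ennreal (measure ?PA {a \<in> space ?PA. t < U a})"
        by (rule PA.emeasure_eq_measure)
      also have "\<dots> \<le> ennreal (4 * real d / t)"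
        using markov[OF t, of n d] by (intro ennreal_leI) (simp add: U_def)
      finally show ?thesis by (rule add_right_mono)
    qed
    also have "\<dots> = ennreal (4 * real d / t + ?\<beta>)" using t by (simp add: ennreal_plus)
    finally have le: "emeasure ?P ?E \<le> ennreal (4 * real d / t + ?\<beta>)" .
    have "ennreal (measure ?P ?E) \<le> ennreal (4 * real d / t + ?\<beta>)"
      using le by (simp add: P.emeasure_eq_measure)
    then show ?thesis using t \<beta>0 by (subst (asm) ennreal_le_iff) auto
  qed
qed



lemma ev_small:
  assumes c: "c > 0" and \<eta>: "\<eta> > 0"
  shows "eventually (\<lambda>d::nat. 4 * exp (- (c * exp (real d))) < \<eta>/2) at_top"
proof -
  define R where "R = ln (8/\<eta>) / c"
  have "eventually (\<lambda>d::nat. R < real d) at_top"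
    using filterlim_real_sequentially by (simp add: filterlim_at_top_dense)
  then show ?thesis
  proof (rule eventually_mono)
    fix d :: nat assume "R < real d"
    moreover have "real d < exp (real d)"
      using exp_ge_add_one_self[of "real d"] by linarith
    ultimately have "R < exp (real d)" by linarith
    then have "ln (8/\<eta>) < c * exp (real d)" using c by (simp add: R_def field_simps)
    then have "- (c * exp (real d)) < ln (\<eta>/8)" using \<eta> by (simp add: ln_div)
    then have "exp (- (c * exp (real d))) < exp (ln (\<eta>/8))" by simp
    also have "\<dots> = \<eta>/8" using \<eta> by simp
    finally show "4 * exp (- (c * exp (real d))) < \<eta>/2" by simp
  qed
qed

theorem proposition4p1:
  fixes n :: "nat \<Rightarrow> nat" and h :: "nat \<Rightarrow> (nat \<Rightarrow> real) \<Rightarrow> real" and M :: real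
  assumes bounded: "\<And>d x. \<bar>h d x\<bar> \<le> M"
    and meas: "\<And>d. (\<lambda>x. h d (pad d x)) \<in> borel_measurable (PiM {..<d} (\<lambda>_. borel))"
    and growth: "filterlim (\<lambda>d. ln (real (n d)) / real d) at_top at_top"
  shows "\<forall>e>0. ((\<lambda>d. measure (sample_space (n d) d)
            {\<omega> \<in> space (sample_space (n d) d).
               \<bar>wemp_exp d (n d) (h d) (Y0 (n d) d \<omega>) (\<lambda>i. Xv d i \<omega>)
                 - post_exp d (h d) (Y0 (n d) d \<omega>)\<bar> > e}) \<longlongrightarrow> 0) at_top"
proof (intro allI impI)
  fix e :: real assume e: "e > 0"
  have M0: "M \<ge> 0" using bounded[of 0 undefined] by linarith
  define \<delta> where "\<delta> = min (1/2) (e / (4 * (1 + M)))"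
  have \<delta>0: "\<delta> > 0" using e M0 unfolding \<delta>_def by simp
  define f where "f d = measure (sample_space (n d) d)
            {\<omega> \<in> space (sample_space (n d) d).
               \<bar>wemp_exp d (n d) (h d) (Y0 (n d) d \<omega>) (\<lambda>i. Xv d i \<omega>)
                 - post_exp d (h d) (Y0 (n d) d \<omega>)\<bar> > e}" for d
  have "(f \<longlongrightarrow> 0) at_top"
  proof (rule order_tendstoI)
    fix a :: real assume "a < 0"
    then show "eventually (\<lambda>d. a < f d) at_top"
      by (intro always_eventually allI) (simp add: f_def less_le_trans[OF _ measure_nonneg])
  next
    fix \<eta> :: real assume \<eta>: "\<eta> > 0"
    define K where "K = ln 2 + 4/\<eta> + 1"
    define c where "c = \<delta>^2 / (2 * (M+1)^2)"
    have c: "c > 0" using \<delta>0 M0 by (simp add: c_def)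
    have l2: "ln 2 > (0::real)" by simp
    have l4: "4 / \<eta> > 0" using \<eta> by simp
    have K: "K > 0" unfolding K_def using l2 l4 by linarith
    have ev1: "eventually (\<lambda>d. K \<le> ln (real (n d)) / real d) at_top"
      using growth by (simp add: filterlim_at_top)
    have ev2: "eventually (\<lambda>d::nat. d \<ge> 1) at_top" by (rule eventually_ge_at_top)
    show "eventually (\<lambda>d. f d < \<eta>) at_top"
      using ev1 ev2 ev_small[OF c \<eta>]
    proof eventually_elim
      case (elim d)
      have d: "d \<ge> 1" using elim(2) .
      have Dp: "real d > 0" using d by simp
      have lnN: "K * real d \<le> ln (real (n d))"
        using elim(1) Dp by (simp add: field_simps)
      have lnpos: "ln (real (n d)) > 0"
        using K Dp lnN by (metis mult_pos_pos order_less_le_trans)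
      have Npos: "real (n d) > 0"
      proof (rule ccontr)
        assume "\<not> real (n d) > 0"
        then have "n d = 0" by simp
        then show False using lnpos by simp
      qed
      have n1: "n d \<ge> 1" using Npos by simp
      define t where "t = 8 * real d / \<eta>"
      have t: "t > 0" using Dp \<eta> by (simp add: t_def)
      have mb: "f d \<le> 4 * real d / t + 4 * exp (- (real (n d) * \<delta>^2 * (exp (-t/2) / 2^d)) / (2 * (M+1)^2))"
        unfolding f_def by (rule main_bound[OF n1 d t meas bounded e \<delta>_def])
      have t1: "4 * real d / t = \<eta>/2" using Dp \<eta> by (simp add: t_def field_simps)
      have Nge: "exp (K * real d) \<le> real (n d)"
        using lnN Npos by (metis exp_le_cancel_iff exp_ln)
      have p2: "(2::real)^d = exp (real d * ln 2)" by (simp add: exp_of_nat_mult)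
      have key: "exp (real d) \<le> real (n d) * (exp (-t/2) / 2^d)"
      proof -
        have "exp (real d) = exp (K * real d) * exp (-t/2) / 2^d"
          unfolding p2 using \<eta> by (simp add: t_def K_def field_simps exp_add[symmetric] exp_diff[symmetric] algebra_simps)
        also have "\<dots> \<le> real (n d) * exp (-t/2) / 2^d"
          using Nge by (intro divide_right_mono mult_right_mono) auto
        finally show ?thesis by simp
      qed
      have "- (real (n d) * \<delta>^2 * (exp (-t/2) / 2^d)) / (2 * (M+1)^2) = - (c * (real (n d) * (exp (-t/2) / 2^d)))"
        by (simp add: c_def field_simps)
      also have "\<dots> \<le> - (c * exp (real d))"
        using mult_left_mono[OF key, of c] c by linarith
      finally have "4 * exp (- (real (n d) * \<delta>^2 * (exp (-t/2) / 2^d)) / (2 * (M+1)^2)) \<le> 4 * exp (- (c * exp (real d)))"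
        by simp
      then show "f d < \<eta>" using mb t1 elim(3) by linarith
    qed
  qed
  then show "((\<lambda>d. measure (sample_space (n d) d)
            {\<omega> \<in> space (sample_space (n d) d).
               \<bar>wemp_exp d (n d) (h d) (Y0 (n d) d \<omega>) (\<lambda>i. Xv d i \<omega>)
                 - post_exp d (h d) (Y0 (n d) d \<omega>)\<bar> > e}) \<longlongrightarrow> 0) at_top"
    by (simp add: f_def[abs_def])
qed


end
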